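(* Assume $f$ is strongly convex on $\mathrm{dom}\,\psi$ with parameter $\mu>0$ (i.e. $\langle\nabla^2 f(x)h,h\rangle \ge \mu\|h\|^2$ for all $x\in\mathrm{dom}\,\psi$, $h\in\mathbb{E}$). Consider the method: choose $H \ge L_2$, $x_0 \in \mathrm{dom}\,\psi$ and $F'_0 \in \partial F(x_0)$; for $k \ge 0$ set $g_k = \|F'_k\|_*$, $A_k = \frac{1}{\sigma}\sqrt{\frac{H}{3}g_k}$, $x_{k+1} = T_{A_k}(x_k)$, and $$F'_{k+1} = \nabla f(x_{k+1}) - \nabla f(x_k) - \nabla^2 f(x_k)(x_{k+1} - x_k) - A_k(\nabla d(x_{k+1}) - \nabla d(x_k)).$$ Then for any $k\ge 0$, $$\|F'_{k+1}\|_* \;\le\; \frac{2c}{\mu}\sqrt{\frac{H}{3}}\,\|F'_k\|_*^{3/2}, \qquad c = \sigma^{-1} + \frac{3L_2}{2H}.$$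
   Context: $\mathbb{E}$ is a finite-dimensional real vector space with an arbitrary norm $\|\cdot\|$; $\mathbb{E}^*$ is its dual with dual norm $\|g\|_* = \max\{\langle g, x\rangle : \|x\|\le 1\}$; for a self-adjoint linear operator $B:\mathbb{E}\to\mathbb{E}^*$, $\|B\| = \max\{|\langle Bx,x\rangle| : \|x\|\le 1\}$. $F = f + \psi$, where $\psi$ is a closed convex function with $\mathrm{dom}\,\psi \subseteq \mathbb{E}$ and $f$ is convex and twice continuously differentiable with $\|\nabla^2 f(x) - \nabla^2 f(y)\| \le L_2\|x-y\|$ for all $x,y\in\mathrm{dom}\,\psi$. The scaling function $d$ is differentiable and satisfies, for some $\sigma\in(0,1]$ and all $x,y \in \mathrm{dom}\,\psi$: $d(y) \ge d(x) + \langle \nabla d(x), y-x\rangle + \frac{\sigma}{2}\|y-x\|^2$ and $\|\nabla d(x) - \nabla d(y)\|_* \le \|x-y\|$. Bregman distance: $\rho(x,y) = d(y) - d(x) - \langle \nabla d(x), y-x\rangle$. For $\bar x\in\mathrm{dom}\,\psi$ and $A>0$, $$T_A(\bar x) = \arg\min_{y\in\mathrm{dom}\,\psi}\Big[ f(\bar x) + \langle \nabla f(\bar x), y-\bar x\rangle + \tfrac12 \langle \nabla^2 f(\bar x)(y-\bar x), y-\bar x\rangle + A\rho(\bar x,y) + \psi(y)\Big].$$ (Each $F'_k$ is an element of $\partial F(x_k)$.) *)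

theory Defs
  imports "HOL-Analysis.Analysis"
begin

text \<open>The space E is modelled by a Euclidean type 'a equipped with an arbitrary norm N;
the dual space E* is identified with 'a via the inner product pairing.\<close>

definition is_norm :: "('a::euclidean_space \<Rightarrow> real) \<Rightarrow> bool" where
  "is_norm N \<longleftrightarrow> (\<forall>x. N x \<ge> 0) \<and> (\<forall>x. N x = 0 \<longleftrightarrow> x = 0)
     \<and> (\<forall>c x. N (c *\<^sub>R x) = \<bar>c\<bar> * N x) \<and> (\<forall>x y. N (x + y) \<le> N x + N y)"

definition dual_norm :: "('a::euclidean_space \<Rightarrow> real) \<Rightarrow> 'a \<Rightarrow> real" where
  "dual_norm N g = Sup {g \<bullet> x | x. N x \<le> 1}"

text \<open>Norm of a (self-adjoint) linear operator B : E \<rightarrow> E*.\<close>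
definition op_norm :: "('a::euclidean_space \<Rightarrow> real) \<Rightarrow> ('a \<Rightarrow> 'a) \<Rightarrow> real" where
  "op_norm N B = Sup {\<bar>B x \<bullet> x\<bar> | x. N x \<le> 1}"

text \<open>Closed convex function psi, given by its (nonempty) effective domain D and its values on D.\<close>
definition closed_convex_fun :: "'a::euclidean_space set \<Rightarrow> ('a \<Rightarrow> real) \<Rightarrow> bool" where
  "closed_convex_fun D \<psi> \<longleftrightarrow> convex D \<and> convex_on D \<psi> \<and>
     closed {(x, t::real). x \<in> D \<and> \<psi> x \<le> t}"

definition subdiff :: "'a::euclidean_space set \<Rightarrow> ('a \<Rightarrow> real) \<Rightarrow> 'a \<Rightarrow> 'a set" where
  "subdiff D F x = {g. x \<in> D \<and> (\<forall>y\<in>D. F y \<ge> F x + g \<bullet> (y - x))}"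

definition bregman :: "('a::euclidean_space \<Rightarrow> real) \<Rightarrow> ('a \<Rightarrow> 'a) \<Rightarrow> 'a \<Rightarrow> 'a \<Rightarrow> real" where
  "bregman d gd x y = d y - d x - gd x \<bullet> (y - x)"

definition model :: "('a::euclidean_space \<Rightarrow> real) \<Rightarrow> ('a \<Rightarrow> 'a) \<Rightarrow> ('a \<Rightarrow> 'a \<Rightarrow> 'a)
    \<Rightarrow> ('a \<Rightarrow> real) \<Rightarrow> ('a \<Rightarrow> 'a) \<Rightarrow> ('a \<Rightarrow> real) \<Rightarrow> real \<Rightarrow> 'a \<Rightarrow> 'a \<Rightarrow> real" where
  "model f gf Hf d gd \<psi> A xb y =
     f xb + gf xb \<bullet> (y - xb) + (1/2) * (Hf xb (y - xb) \<bullet> (y - xb)) + A * bregman d gd xb y + \<psi> y"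

definition is_T :: "'a::euclidean_space set \<Rightarrow> ('a \<Rightarrow> real) \<Rightarrow> ('a \<Rightarrow> 'a) \<Rightarrow> ('a \<Rightarrow> 'a \<Rightarrow> 'a)
    \<Rightarrow> ('a \<Rightarrow> real) \<Rightarrow> ('a \<Rightarrow> 'a) \<Rightarrow> ('a \<Rightarrow> real) \<Rightarrow> real \<Rightarrow> 'a \<Rightarrow> 'a \<Rightarrow> bool" where
  "is_T D f gf Hf d gd \<psi> A xb y \<longleftrightarrow> y \<in> D \<and>
     (\<forall>z\<in>D. model f gf Hf d gd \<psi> A xb y \<le> model f gf Hf d gd \<psi> A xb z)"

end

theory Submission
  imports Defs
begin


lemma N0: "is_norm N \<Longrightarrow> N 0 = 0" by (simp add: is_norm_def)
lemma Nge0: "is_norm N \<Longrightarrow> N x \<ge> 0" by (simp add: is_norm_def)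
lemma Neq0: "is_norm N \<Longrightarrow> N x = 0 \<longleftrightarrow> x = 0" by (simp add: is_norm_def)
lemma Nscale: "is_norm N \<Longrightarrow> N (c *\<^sub>R x) = \<bar>c\<bar> * N x" by (simp add: is_norm_def)
lemma Ntri: "is_norm N \<Longrightarrow> N (x + y) \<le> N x + N y" by (simp add: is_norm_def)
lemma Nminus: "is_norm N \<Longrightarrow> N (- x) = N x"
  using Nscale[of N "-1" x] by simp
lemma Ncomm: "is_norm N \<Longrightarrow> N (x - y) = N (y - x)"
  using Nminus[of N "x - y"] by simp
lemma Ndiff: "is_norm N \<Longrightarrow> N x - N y \<le> N (x - y)"
  using Ntri[of N "x - y" y] by simp

lemma Nsum: assumes "is_norm N" "finite S" shows "N (sum g S) \<le> (\<Sum>i\<in>S. N (g i))"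
  using assms(2)
proof (induction S rule: finite_induct)
  case empty then show ?case by (simp add: N0[OF assms(1)])
next
  case (insert a S)
  then show ?case using Ntri[OF assms(1), of "g a" "sum g S"] by simp
qed

lemma N_upper:
  fixes N :: "'a::euclidean_space \<Rightarrow> real"
  assumes "is_norm N"
  shows "N x \<le> (\<Sum>b\<in>Basis. N b) * norm x"
proof -
  have "N x = N (\<Sum>b\<in>Basis. (x \<bullet> b) *\<^sub>R b)" by (simp add: euclidean_representation)
  also have "\<dots> \<le> (\<Sum>b\<in>Basis. N ((x \<bullet> b) *\<^sub>R b))" by (rule Nsum[OF assms]) simp
  also have "\<dots> = (\<Sum>b\<in>Basis. \<bar>x \<bullet> b\<bar> * N b)" using Nscale[OF assms] by simp
  also have "\<dots> \<le> (\<Sum>b\<in>Basis. norm x * N b)"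
    by (rule sum_mono) (simp add: Basis_le_norm Nge0[OF assms] mult_right_mono)
  finally show ?thesis by (simp add: sum_distrib_right[symmetric] mult.commute)
qed

lemma N_cont:
  fixes N :: "'a::euclidean_space \<Rightarrow> real"
  assumes "is_norm N"
  shows "continuous_on S N"
proof -
  let ?C = "\<Sum>b\<in>Basis. N b"
  have "?C-lipschitz_on S N"
  proof (rule lipschitz_onI)
    fix x y
    have "N x - N y \<le> ?C * norm (x - y)" using Ndiff[OF assms, of x y] N_upper[OF assms, of "x - y"] by linarith
    moreover have "N y - N x \<le> ?C * norm (x - y)" using Ndiff[OF assms, of y x] N_upper[OF assms, of "y - x"]
      by (simp add: norm_minus_commute)
    ultimately show "dist (N x) (N y) \<le> ?C * dist x y" by (simp add: dist_norm dist_real_def abs_le_iff)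
  next
    show "0 \<le> ?C" by (simp add: Nge0[OF assms] sum_nonneg)
  qed
  then show ?thesis by (rule lipschitz_on_continuous_on)
qed

lemma N_lower:
  fixes N :: "'a::euclidean_space \<Rightarrow> real"
  assumes "is_norm N"
  shows "\<exists>c>0. \<forall>x. c * norm x \<le> N x"
proof -
  obtain b :: 'a where b: "b \<in> Basis" using nonempty_Basis by blast
  have "sphere (0::'a) 1 \<noteq> {}" using b by (auto simp: sphere_def intro!: exI[of _ b])
  then obtain p where p: "p \<in> sphere (0::'a) 1" and pmin: "\<forall>y\<in>sphere 0 1. N p \<le> N y"
    using continuous_attains_inf[OF compact_sphere _ N_cont[OF assms]] by blast
  have "p \<noteq> 0" using p by auto
  then have pos: "N p > 0" using Neq0[OF assms, of p] Nge0[OF assms, of p] by linarith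
  have "N p * norm x \<le> N x" for x
  proof (cases "x = 0")
    case True then show ?thesis by (simp add: N0[OF assms])
  next
    case False
    then have "(1 / norm x) *\<^sub>R x \<in> sphere 0 1" by auto
    then have "N p \<le> N ((1 / norm x) *\<^sub>R x)" using pmin by blast
    also have "\<dots> = N x / norm x" using Nscale[OF assms] by simp
    finally show ?thesis using False by (simp add: field_simps)
  qed
  then show ?thesis using pos by blast
qed


lemma norm_le_N:
  fixes N :: "'a::euclidean_space \<Rightarrow> real"
  assumes "is_norm N"
  obtains c where "c > 0" "\<And>x. norm x \<le> c * N x"
proof -
  obtain c where c: "c > 0" "\<And>x. c * norm x \<le> N x" using N_lower[OF assms] by blast
  have "norm x \<le> (1/c) * N x" for x using c(2)[of x] c(1) by (simp add: field_simps)
  then show ?thesis using that[of "1/c"] c(1) by simp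
qed

lemma dn_bdd:
  fixes N :: "'a::euclidean_space \<Rightarrow> real"
  assumes "is_norm N"
  shows "bdd_above {g \<bullet> x | x. N x \<le> 1}"
proof -
  obtain c where c: "c > 0" "\<And>x. norm x \<le> c * N x" using norm_le_N[OF assms] by blast
  have "g \<bullet> x \<le> norm g * c" if "N x \<le> 1" for x
  proof -
    have "g \<bullet> x \<le> norm g * norm x" using Cauchy_Schwarz_ineq2[of g x] by linarith
    also have "\<dots> \<le> norm g * (c * N x)" by (rule mult_left_mono[OF c(2)]) simp
    also have "\<dots> \<le> norm g * c" using that c(1) by (simp add: mult_left_mono)
    finally show ?thesis .
  qed
  then show ?thesis by (auto simp: bdd_above_def)
qed

lemma dn_upper:
  assumes "is_norm N" "N x \<le> 1"
  shows "g \<bullet> x \<le> dual_norm N g"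
  unfolding dual_norm_def using assms by (auto intro!: cSup_upper dn_bdd)

lemma dn_ge0: "is_norm N \<Longrightarrow> 0 \<le> dual_norm N g"
  using dn_upper[of N 0 g] N0[of N] by simp

lemma dn_least:
  assumes "\<And>x. N x \<le> 1 \<Longrightarrow> g \<bullet> x \<le> M" "is_norm N"
  shows "dual_norm N g \<le> M"
  unfolding dual_norm_def using assms N0[OF assms(2)]
  by (intro cSup_least) (auto intro!: exI[of _ 0])

lemma dn_mul:
  assumes "is_norm N"
  shows "g \<bullet> x \<le> dual_norm N g * N x"
proof (cases "x = 0")
  case True then show ?thesis by (simp add: N0[OF assms])
next
  case False
  then have pos: "N x > 0" using Neq0[OF assms, of x] Nge0[OF assms, of x] by linarith
  have "N ((1 / N x) *\<^sub>R x) \<le> 1" using Nscale[OF assms] pos by simp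
  then have "g \<bullet> ((1 / N x) *\<^sub>R x) \<le> dual_norm N g" by (rule dn_upper[OF assms])
  then show ?thesis using pos by (simp add: field_simps)
qed

lemma op_bdd:
  fixes N :: "'a::euclidean_space \<Rightarrow> real"
  assumes "is_norm N" "bounded_linear B"
  shows "bdd_above {\<bar>B x \<bullet> x\<bar> | x. N x \<le> 1}"
proof -
  obtain c where c: "c > 0" "\<And>x. norm x \<le> c * N x" using norm_le_N[OF assms(1)] by blast
  obtain K where K: "K > 0" "\<And>x. norm (B x) \<le> norm x * K" using bounded_linear.pos_bounded[OF assms(2)] by blast
  have "\<bar>B x \<bullet> x\<bar> \<le> K * c * c" if "N x \<le> 1" for x
  proof -
    have nx: "norm x \<le> c" using c(2)[of x] that c(1) by (smt (verit) mult_left_mono mult_cancel_left1)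
    have "\<bar>B x \<bullet> x\<bar> \<le> norm (B x) * norm x" by (rule Cauchy_Schwarz_ineq2)
    also have "\<dots> \<le> (norm x * K) * norm x" by (rule mult_right_mono[OF K(2)]) simp
    also have "\<dots> \<le> (c * K) * c" using nx K(1) c(1) by (intro mult_mono) auto
    finally show ?thesis by (simp add: ac_simps)
  qed
  then show ?thesis by (auto simp: bdd_above_def)
qed

lemma op_ge0:
  fixes N :: "'a::euclidean_space \<Rightarrow> real"
  assumes "is_norm N" "bounded_linear B"
  shows "0 \<le> op_norm N B"
proof -
  have "\<bar>B 0 \<bullet> 0\<bar> \<le> op_norm N B" unfolding op_norm_def
    using N0[OF assms(1)] by (intro cSup_upper op_bdd assms) (auto intro!: exI[of _ 0])
  then show ?thesis by simp
qed

lemma op_mul: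
  fixes N :: "'a::euclidean_space \<Rightarrow> real"
  assumes "is_norm N" "bounded_linear B"
  shows "\<bar>B x \<bullet> x\<bar> \<le> op_norm N B * (N x)\<^sup>2"
proof (cases "x = 0")
  case True then show ?thesis using linear_0[OF bounded_linear.linear[OF assms(2)]] op_ge0[OF assms] by simp
next
  case False
  then have pos: "N x > 0" using Neq0[OF assms(1), of x] Nge0[OF assms(1), of x] by linarith
  let ?y = "(1 / N x) *\<^sub>R x"
  have "N ?y \<le> 1" using Nscale[OF assms(1)] pos by simp
  then have "\<bar>B ?y \<bullet> ?y\<bar> \<in> {\<bar>B x \<bullet> x\<bar> | x. N x \<le> 1}" by blast
  then have "\<bar>B ?y \<bullet> ?y\<bar> \<le> op_norm N B" unfolding op_norm_def
    by (intro cSup_upper op_bdd assms)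
  moreover have "B ?y = (1 / N x) *\<^sub>R B x"
    using linear_scale[OF bounded_linear.linear[OF assms(2)]] by blast
  then have eq: "B ?y \<bullet> ?y = (B x \<bullet> x) / (N x)\<^sup>2"
    by (simp add: power2_eq_square)
  ultimately have "\<bar>(B x \<bullet> x) / (N x)\<^sup>2\<bar> \<le> op_norm N B" by (simp only: eq)
  then have "\<bar>B x \<bullet> x\<bar> / (N x)\<^sup>2 \<le> op_norm N B" by (simp add: abs_div)
  then show ?thesis using pos by (simp add: field_simps)
qed

lemma polar:
  fixes N :: "'a::euclidean_space \<Rightarrow> real"
  assumes "is_norm N" "linear B" "\<And>a b. B a \<bullet> b = B b \<bullet> a"
    and M: "\<And>y. \<bar>B y \<bullet> y\<bar> \<le> M * (N y)\<^sup>2"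
  shows "B a \<bullet> b \<le> 2 * M * N a * N b"
proof (cases "a = 0 \<or> b = 0")
  case True
  then show ?thesis using linear_0[OF assms(2)] N0[OF assms(1)] by auto
next
  case False
  then have "a \<noteq> 0" "b \<noteq> 0" by auto
  then have pa: "N a > 0" and pb: "N b > 0"
    using Neq0[OF assms(1), of a] Nge0[OF assms(1), of a] Neq0[OF assms(1), of b] Nge0[OF assms(1), of b]
    by linarith+
  define a1 where "a1 = (1 / N a) *\<^sub>R a"
  define b1 where "b1 = (1 / N b) *\<^sub>R b"
  have na: "N a1 = 1" using pa Nscale[OF assms(1), of "1 / N a" a] by (simp add: a1_def)
  have nb: "N b1 = 1" using pb Nscale[OF assms(1), of "1 / N b" b] by (simp add: b1_def)
  have M0: "M \<ge> 0" using M[of a1] na by simp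
  have p1: "N (a1 + b1) \<le> 2" using Ntri[OF assms(1), of a1 b1] na nb by simp
  have p2: "N (a1 - b1) \<le> 2" using Ntri[OF assms(1), of a1 "- b1"] na nb Nminus[OF assms(1), of b1] by simp
  have "(N (a1 + b1))\<^sup>2 \<le> 2\<^sup>2" by (rule power_mono[OF p1 Nge0[OF assms(1)]])
  then have s1: "(N (a1 + b1))\<^sup>2 \<le> 4" by simp
  have "(N (a1 - b1))\<^sup>2 \<le> 2\<^sup>2" by (rule power_mono[OF p2 Nge0[OF assms(1)]])
  then have s2: "(N (a1 - b1))\<^sup>2 \<le> 4" by simp
  have l1: "B (a1 + b1) = B a1 + B b1" by (rule linear_add[OF assms(2)])
  have l2: "B (a1 - b1) = B a1 - B b1" by (rule linear_diff[OF assms(2)])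
  have sy: "B b1 \<bullet> a1 = B a1 \<bullet> b1" by (rule assms(3))
  have e1: "B (a1 + b1) \<bullet> (a1 + b1) = B a1 \<bullet> a1 + B a1 \<bullet> b1 + B b1 \<bullet> a1 + B b1 \<bullet> b1"
    unfolding l1 by (simp only: inner_add_left inner_add_right add.assoc)
  have e2: "B (a1 - b1) \<bullet> (a1 - b1) = B a1 \<bullet> a1 - B a1 \<bullet> b1 - B b1 \<bullet> a1 + B b1 \<bullet> b1"
    unfolding l2 inner_diff_left inner_diff_right by linarith
  have e: "B (a1 + b1) \<bullet> (a1 + b1) - B (a1 - b1) \<bullet> (a1 - b1) = 4 * (B a1 \<bullet> b1)"
    unfolding e1 e2 sy by linarith
  have "4 * (B a1 \<bullet> b1) \<le> M * (N (a1 + b1))\<^sup>2 + M * (N (a1 - b1))\<^sup>2"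
    using M[of "a1 + b1"] M[of "a1 - b1"] e by linarith
  also have "\<dots> \<le> M * 4 + M * 4" using M0 s1 s2 by (intro add_mono mult_left_mono) auto
  finally have le: "B a1 \<bullet> b1 \<le> 2 * M" by simp
  have "B a1 = (1 / N a) *\<^sub>R B a" unfolding a1_def by (rule linear_scale[OF assms(2)])
  then have "B a1 \<bullet> b1 = (B a \<bullet> b) / (N a * N b)" by (simp add: b1_def)
  with le have "(B a \<bullet> b) / (N a * N b) \<le> 2 * M" by simp
  then show ?thesis using pa pb by (simp add: pos_divide_le_eq mult.assoc)
qed

lemma ray_f:
  assumes "\<And>y. (f has_derivative (\<lambda>h. gf y \<bullet> h)) (at y)"
  shows "((\<lambda>t. f (p + t *\<^sub>R w)) has_real_derivative (gf (p + t *\<^sub>R w) \<bullet> w)) (at t)"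
proof -
  have i: "((\<lambda>t. p + t *\<^sub>R w) has_derivative (\<lambda>s. s *\<^sub>R w)) (at t)"
    by (auto intro!: derivative_eq_intros)
  have "((\<lambda>t. f (p + t *\<^sub>R w)) has_derivative (\<lambda>s. gf (p + t *\<^sub>R w) \<bullet> (s *\<^sub>R w))) (at t)"
    using has_derivative_compose[OF i assms] by simp
  moreover have "(\<lambda>s. gf (p + t *\<^sub>R w) \<bullet> (s *\<^sub>R w)) = (*) (gf (p + t *\<^sub>R w) \<bullet> w)"
    by (rule ext) simp
  ultimately show ?thesis unfolding has_field_derivative_def by simp
qed

lemma ray_gf:
  assumes "\<And>y. (gf has_derivative Hf y) (at y)"
  shows "((\<lambda>t. gf (p + t *\<^sub>R w) \<bullet> u) has_real_derivative (Hf (p + t *\<^sub>R w) w \<bullet> u)) (at t)"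
proof -
  have i: "((\<lambda>t. p + t *\<^sub>R w) has_derivative (\<lambda>s. s *\<^sub>R w)) (at t)"
    by (auto intro!: derivative_eq_intros)
  have "((\<lambda>t. gf (p + t *\<^sub>R w)) has_derivative (\<lambda>s. Hf (p + t *\<^sub>R w) (s *\<^sub>R w))) (at t)"
    using has_derivative_compose[OF i assms] by simp
  then have "((\<lambda>t. gf (p + t *\<^sub>R w) \<bullet> u) has_derivative (\<lambda>s. Hf (p + t *\<^sub>R w) (s *\<^sub>R w) \<bullet> u)) (at t)"
    by (rule has_derivative_inner_left)
  moreover have "Hf (p + t *\<^sub>R w) (s *\<^sub>R w) = s *\<^sub>R Hf (p + t *\<^sub>R w) w" for s
    using linear_scale[OF has_derivative_linear[OF assms]] by blast
  ultimately have "((\<lambda>t. gf (p + t *\<^sub>R w) \<bullet> u) has_derivative (\<lambda>s. s * (Hf (p + t *\<^sub>R w) w \<bullet> u))) (at t)"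
    by simp
  moreover have "(\<lambda>s. s * (Hf (p + t *\<^sub>R w) w \<bullet> u)) = (*) (Hf (p + t *\<^sub>R w) w \<bullet> u)"
    by (rule ext) (simp add: mult.commute)
  ultimately show ?thesis unfolding has_field_derivative_def by simp
qed

lemma opt_ray:
  fixes \<phi> :: "real \<Rightarrow> real"
  assumes "(\<phi> has_real_derivative D) (at 0)"
    and "\<And>t. 0 < t \<Longrightarrow> t \<le> 1 \<Longrightarrow> \<phi> 0 \<le> \<phi> t + t * c"
  shows "0 \<le> D + c"
proof (rule ccontr)
  assume "\<not> 0 \<le> D + c"
  have "((\<lambda>t. \<phi> t + t * c) has_real_derivative (D + c)) (at 0)"
    using assms(1) by (auto intro!: derivative_eq_intros)
  moreover have "D + c < 0" using \<open>\<not> 0 \<le> D + c\<close> by simp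
  ultimately have "\<exists>d>0. \<forall>h>0. h < d \<longrightarrow> (\<lambda>t. \<phi> t + t * c) 0 > (\<lambda>t. \<phi> t + t * c) (0 + h)"
    by (rule DERIV_neg_dec_right)
  then obtain d where d: "d > 0" "\<forall>h>0. h < d \<longrightarrow> \<phi> 0 > \<phi> h + h * c"
    by auto
  define h where "h = min (d/2) 1"
  have "h > 0" "h < d" "h \<le> 1" using d(1) by (auto simp: h_def)
  then show False using d(2) assms(2)[of h] by auto
qed

lemma taylor1:
  fixes \<phi> \<phi>' :: "real \<Rightarrow> real"
  assumes "\<And>t. 0 \<le> t \<Longrightarrow> t \<le> 1 \<Longrightarrow> (\<phi> has_real_derivative \<phi>' t) (at t)"
    and "\<And>t. 0 \<le> t \<Longrightarrow> t \<le> 1 \<Longrightarrow> \<phi>' t - \<phi>' 0 \<le> K * t"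
  shows "\<phi> 1 - \<phi> 0 - \<phi>' 0 \<le> K / 2"
proof -
  let ?g = "\<lambda>t. \<phi> t - t * \<phi>' 0 - K / 2 * t\<^sup>2"
  have "?g 1 \<le> ?g 0"
  proof (rule DERIV_nonpos_imp_nonincreasing[of 0 1 ?g])
    fix t :: real assume t: "0 \<le> t" "t \<le> 1"
    have "(?g has_real_derivative (\<phi>' t - \<phi>' 0 - K * t)) (at t)"
      using assms(1)[OF t] by (auto intro!: derivative_eq_intros)
    then show "\<exists>y. (?g has_real_derivative y) (at t) \<and> y \<le> 0" using assms(2)[OF t] by force
  qed simp
  then show ?thesis by simp
qed



lemma hess_D:
  fixes f :: "'a::euclidean_space \<Rightarrow> real"
  assumes fg: "\<And>y. (f has_derivative (\<lambda>h. gf y \<bullet> h)) (at y)"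
    and fh: "\<And>y. (gf has_derivative Hf y) (at y)"
    and t: "t > 0"
  shows "\<exists>a b. 0 < a \<and> a < t \<and> 0 < b \<and> b < t \<and>
    f (x + t *\<^sub>R v + t *\<^sub>R u) - f (x + t *\<^sub>R u) - f (x + t *\<^sub>R v) + f x
      = t * (t * (Hf (x + a *\<^sub>R u + b *\<^sub>R v) v \<bullet> u))"
proof -
  let ?k = "\<lambda>s. f ((x + t *\<^sub>R v) + s *\<^sub>R u) - f (x + s *\<^sub>R u)"
  have kd: "DERIV ?k s :> (gf ((x + t *\<^sub>R v) + s *\<^sub>R u) \<bullet> u - gf (x + s *\<^sub>R u) \<bullet> u)" if "0 \<le> s" "s \<le> t" for s
    using ray_f[OF fg, of "x + t *\<^sub>R v" u s] ray_f[OF fg, of x u s] by (rule DERIV_diff)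
  obtain a where a: "0 < a" "a < t"
    "?k t - ?k 0 = (t - 0) * (gf ((x + t *\<^sub>R v) + a *\<^sub>R u) \<bullet> u - gf (x + a *\<^sub>R u) \<bullet> u)"
    using MVT2[of 0 t ?k "\<lambda>s. gf ((x + t *\<^sub>R v) + s *\<^sub>R u) \<bullet> u - gf (x + s *\<^sub>R u) \<bullet> u", OF t kd] by blast
  let ?m = "\<lambda>e. gf ((x + a *\<^sub>R u) + e *\<^sub>R v) \<bullet> u"
  have md: "DERIV ?m e :> Hf ((x + a *\<^sub>R u) + e *\<^sub>R v) v \<bullet> u" if "0 \<le> e" "e \<le> t" for e
    by (rule ray_gf[OF fh])
  obtain b where b: "0 < b" "b < t"
    "?m t - ?m 0 = (t - 0) * (Hf ((x + a *\<^sub>R u) + b *\<^sub>R v) v \<bullet> u)"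
    using MVT2[of 0 t ?m "\<lambda>e. Hf ((x + a *\<^sub>R u) + e *\<^sub>R v) v \<bullet> u", OF t md] by blast
  have ee: "x + t *\<^sub>R v + a *\<^sub>R u = x + a *\<^sub>R u + t *\<^sub>R v" by (simp add: algebra_simps)
  have "?k t - ?k 0 = t * (t * (Hf (x + a *\<^sub>R u + b *\<^sub>R v) v \<bullet> u))"
    using a(3) b(3) unfolding ee by simp
  then show ?thesis using a b by (intro exI[of _ a] exI[of _ b]) simp
qed

lemma hess_sym:
  fixes f :: "'a::euclidean_space \<Rightarrow> real"
  assumes fg: "\<And>y. (f has_derivative (\<lambda>h. gf y \<bullet> h)) (at y)"
    and fh: "\<And>y. (gf has_derivative Hf y) (at y)"
    and hc: "\<And>h. continuous_on UNIV (\<lambda>y. Hf y h)"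
  shows "Hf x u \<bullet> v = Hf x v \<bullet> u"
proof (rule ccontr)
  assume ne: "Hf x u \<bullet> v \<noteq> Hf x v \<bullet> u"
  let ?q = "\<lambda>z. Hf z v \<bullet> u" and ?q' = "\<lambda>z. Hf z u \<bullet> v"
  define e where "e = \<bar>?q x - ?q' x\<bar> / 2"
  have e: "e > 0" using ne by (simp add: e_def)
  have cq: "isCont ?q x" and cq': "isCont ?q' x"
    using hc[of v] hc[of u] by (auto simp: continuous_on_eq_continuous_at intro!: continuous_intros)
  obtain d1 where d1: "d1 > 0" "\<And>z. dist z x < d1 \<Longrightarrow> dist (?q z) (?q x) < e"
    using cq e unfolding continuous_at_eps_delta by blast
  obtain d2 where d2: "d2 > 0" "\<And>z. dist z x < d2 \<Longrightarrow> dist (?q' z) (?q' x) < e"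
    using cq' e unfolding continuous_at_eps_delta by blast
  define d where "d = min d1 d2"
  define t where "t = d / (2 * (norm u + norm v + 1))"
  have d: "d > 0" using d1 d2 by (simp add: d_def)
  have den: "0 < 2 * (norm u + norm v + 1)" by (smt (verit) norm_ge_zero)
  have t: "t > 0" unfolding t_def by (rule divide_pos_pos[OF d den])
  have close: "dist (x + a *\<^sub>R p + b *\<^sub>R w) x < d" if "0 < a" "a < t" "0 < b" "b < t"
    and "(p = u \<and> w = v) \<or> (p = v \<and> w = u)" for a b p w
  proof -
    have "dist (x + a *\<^sub>R p + b *\<^sub>R w) x = norm (a *\<^sub>R p + b *\<^sub>R w)" by (simp add: dist_norm)
    also have "\<dots> \<le> a * norm p + b * norm w" using that
      by (metis (no_types) norm_scaleR norm_triangle_ineq abs_of_pos order_trans add_mono order_refl)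
    also have "\<dots> \<le> t * norm p + t * norm w" using that
      by (intro add_mono mult_right_mono) auto
    also have "\<dots> = t * (norm u + norm v)" using that(5) by (auto simp: algebra_simps)
    also have "\<dots> < d"
    proof -
      have "t * (norm u + norm v) < t * (2 * (norm u + norm v + 1))" using t
        by (intro mult_strict_left_mono) (smt (verit) norm_ge_zero)+
      also have "\<dots> = d" unfolding t_def using den by simp
      finally show ?thesis .
    qed
    finally show ?thesis .
  qed
  obtain a b where ab: "0 < a" "a < t" "0 < b" "b < t"
    "f (x + t *\<^sub>R v + t *\<^sub>R u) - f (x + t *\<^sub>R u) - f (x + t *\<^sub>R v) + f x
      = t * (t * (Hf (x + a *\<^sub>R u + b *\<^sub>R v) v \<bullet> u))"
    using hess_D[OF fg fh t] by blast
  obtain a' b' where ab': "0 < a'" "a' < t" "0 < b'" "b' < t"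
    "f (x + t *\<^sub>R u + t *\<^sub>R v) - f (x + t *\<^sub>R v) - f (x + t *\<^sub>R u) + f x
      = t * (t * (Hf (x + a' *\<^sub>R v + b' *\<^sub>R u) u \<bullet> v))"
    using hess_D[OF fg fh t, of x u v] by blast
  have ee: "x + t *\<^sub>R u + t *\<^sub>R v = x + t *\<^sub>R v + t *\<^sub>R u" by (simp add: algebra_simps)
  have "t * (t * (?q (x + a *\<^sub>R u + b *\<^sub>R v))) = t * (t * (?q' (x + a' *\<^sub>R v + b' *\<^sub>R u)))"
    using ab(5) ab'(5) unfolding ee by linarith
  then have eq: "?q (x + a *\<^sub>R u + b *\<^sub>R v) = ?q' (x + a' *\<^sub>R v + b' *\<^sub>R u)" using t by simp
  have "dist (?q (x + a *\<^sub>R u + b *\<^sub>R v)) (?q x) < e"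
    using d1(2) close[of a b u v] ab by (simp add: d_def)
  moreover have "dist (?q' (x + a' *\<^sub>R v + b' *\<^sub>R u)) (?q' x) < e"
    using d2(2) close[of a' b' v u] ab' by (simp add: d_def)
  ultimately show False using eq by (simp add: e_def dist_real_def) (smt (verit))
qed



lemma seg_in:
  assumes "convex D" "x \<in> D" "y \<in> D" "0 \<le> t" "t \<le> 1"
  shows "x + t *\<^sub>R (y - x) \<in> D"
proof -
  have "(1 - t) *\<^sub>R x + t *\<^sub>R y \<in> D" using assms by (intro convexD) auto
  moreover have "(1 - t) *\<^sub>R x + t *\<^sub>R y = x + t *\<^sub>R (y - x)" by (simp add: algebra_simps)
  ultimately show ?thesis by simp
qed

lemma seg_conv:
  assumes "convex_on D \<psi>" "x \<in> D" "y \<in> D" "0 \<le> t" "t \<le> 1"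
  shows "\<psi> (x + t *\<^sub>R (y - x)) \<le> (1 - t) * \<psi> x + t * \<psi> y"
proof -
  have "\<psi> ((1 - t) *\<^sub>R x + t *\<^sub>R y) \<le> (1 - t) * \<psi> x + t * \<psi> y"
    using assms by (intro convex_onD) auto
  moreover have "(1 - t) *\<^sub>R x + t *\<^sub>R y = x + t *\<^sub>R (y - x)" by (simp add: algebra_simps)
  ultimately show ?thesis by simp
qed

lemma subgrad_split:
  assumes fg: "\<And>y. (f has_derivative (\<lambda>h. gf y \<bullet> h)) (at y)"
    and D: "convex D" "convex_on D \<psi>" and x: "x \<in> D"
    and sg: "\<And>y. y \<in> D \<Longrightarrow> f y + \<psi> y \<ge> f x + \<psi> x + g \<bullet> (y - x)"
    and y: "y \<in> D"
  shows "\<psi> y \<ge> \<psi> x + (g - gf x) \<bullet> (y - x)"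
proof -
  let ?w = "y - x"
  let ?\<phi> = "\<lambda>t. f (x + t *\<^sub>R ?w) - t * (g \<bullet> ?w)"
  have der: "(?\<phi> has_real_derivative (gf (x + 0 *\<^sub>R ?w) \<bullet> ?w - g \<bullet> ?w)) (at 0)"
    using ray_f[OF fg, of x ?w 0] by (auto intro!: derivative_eq_intros)
  have "?\<phi> 0 \<le> ?\<phi> t + t * (\<psi> y - \<psi> x)" if t: "0 < t" "t \<le> 1" for t
  proof -
    have zD: "x + t *\<^sub>R ?w \<in> D" using seg_in[OF D(1) x y] t by simp
    have c: "\<psi> (x + t *\<^sub>R ?w) \<le> (1 - t) * \<psi> x + t * \<psi> y" using seg_conv[OF D(2) x y] t by simp
    have "f (x + t *\<^sub>R ?w) + \<psi> (x + t *\<^sub>R ?w) \<ge> f x + \<psi> x + g \<bullet> (t *\<^sub>R ?w)"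
      using sg[OF zD] by simp
    then show ?thesis using c by (simp add: algebra_simps)
  qed
  from opt_ray[OF der this] show ?thesis by (simp add: inner_diff_left)
qed

lemma model_opt:
  fixes xb xp :: "'a::euclidean_space"
  assumes lin: "linear (Hf xb)" and sym: "\<And>u v. Hf xb u \<bullet> v = Hf xb v \<bullet> u"
    and dg: "\<And>y. (d has_derivative (\<lambda>h. gd y \<bullet> h)) (at y)"
    and D: "convex D" "convex_on D \<psi>"
    and T: "is_T D f gf Hf d gd \<psi> A xb xp"
    and y: "y \<in> D"
  shows "\<psi> y \<ge> \<psi> xp - (gf xb + Hf xb (xp - xb) + A *\<^sub>R (gd xp - gd xb)) \<bullet> (y - xp)"
proof -
  have xp: "xp \<in> D" using T by (simp add: is_T_def)
  let ?w = "y - xp" and ?v = "xp - xb" and ?L = "Hf xb"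
  define P where "P t = f xb + gf xb \<bullet> ?v + t * (gf xb \<bullet> ?w)
     + 1/2 * (?L ?v \<bullet> ?v + t * (?L ?v \<bullet> ?w) + t * (?L ?w \<bullet> ?v) + t\<^sup>2 * (?L ?w \<bullet> ?w))
     + A * (d (xp + t *\<^sub>R ?w) - d xb - gd xb \<bullet> ?v - t * (gd xb \<bullet> ?w))" for t
  have mP: "model f gf Hf d gd \<psi> A xb (xp + t *\<^sub>R ?w) = P t + \<psi> (xp + t *\<^sub>R ?w)" for t
  proof -
    have e1: "xp + t *\<^sub>R ?w - xb = ?v + t *\<^sub>R ?w" by (simp add: algebra_simps)
    have e2: "?L (?v + t *\<^sub>R ?w) = ?L ?v + t *\<^sub>R ?L ?w"
      using linear_add[OF lin] linear_scale[OF lin] by simp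
    show ?thesis unfolding model_def bregman_def P_def e1 e2
      by (simp add: inner_add_left inner_add_right algebra_simps power2_eq_square)
  qed
  have der: "(P has_real_derivative
      (gf xb \<bullet> ?w + 1/2 * (?L ?v \<bullet> ?w + ?L ?w \<bullet> ?v) + A * (gd (xp + 0 *\<^sub>R ?w) \<bullet> ?w - gd xb \<bullet> ?w))) (at 0)"
    unfolding P_def using ray_f[OF dg, of xp ?w 0]
    by (auto intro!: derivative_eq_intros)
  have "P 0 \<le> P t + t * (\<psi> y - \<psi> xp)" if t: "0 < t" "t \<le> 1" for t
  proof -
    have zD: "xp + t *\<^sub>R ?w \<in> D" using seg_in[OF D(1) xp y] t by simp
    have c: "\<psi> (xp + t *\<^sub>R ?w) \<le> (1 - t) * \<psi> xp + t * \<psi> y" using seg_conv[OF D(2) xp y] t by simp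
    have "model f gf Hf d gd \<psi> A xb xp \<le> model f gf Hf d gd \<psi> A xb (xp + t *\<^sub>R ?w)"
      using T zD by (simp add: is_T_def)
    then have "P 0 + \<psi> xp \<le> P t + \<psi> (xp + t *\<^sub>R ?w)" using mP[of 0] mP[of t] by simp
    then show ?thesis using c by (simp add: algebra_simps)
  qed
  from opt_ray[OF der this] have
    "0 \<le> gf xb \<bullet> ?w + 1/2 * (?L ?v \<bullet> ?w + ?L ?w \<bullet> ?v) + A * (gd xp \<bullet> ?w - gd xb \<bullet> ?w) + (\<psi> y - \<psi> xp)"
    by simp
  moreover have "?L ?w \<bullet> ?v = ?L ?v \<bullet> ?w" by (rule sym)
  ultimately show ?thesis by (simp add: inner_add_left inner_diff_left algebra_simps)
qed



lemma arith_final: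
  fixes r g \<mu> \<sigma> L2 H s A :: real
  assumes r: "r \<ge> 0" and g: "g \<ge> 0" and mu: "\<mu> > 0" and sg: "\<sigma> > 0" and L: "L2 \<ge> 0" and H: "H \<ge> L2"
    and s: "s = sqrt (H / 3 * g)" and A: "A = 1 / \<sigma> * s" and key: "r * (\<mu> + s) \<le> g"
  shows "L2 * r\<^sup>2 + A * r \<le> 2 * (1 / \<sigma> + 3 * L2 / (2 * H)) / \<mu> * sqrt (H / 3) * g powr (3/2)"
proof (cases "H = 0")
  case True
  then have "L2 = 0" "s = 0" "A = 0" using L H s A by auto
  then show ?thesis using True by simp
next
  case False
  then have Hp: "H > 0" using H L by simp
  have s0: "s \<ge> 0" unfolding s using Hp g by simp
  have ss: "s\<^sup>2 = H / 3 * g" using s Hp g by simp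
  have gp: "g powr (3/2) = g * sqrt g"
  proof (cases "g = 0")
    case True then show ?thesis by simp
  next
    case False
    then have "g > 0" using g by simp
    then have "g powr (3/2) = g powr 1 * g powr (1/2)" using powr_add[of g 1 "1/2"] by simp
    then show ?thesis using \<open>g > 0\<close> by (simp add: powr_half_sqrt)
  qed
  have sq: "sqrt (H / 3) * sqrt g = s" unfolding s using real_sqrt_mult[of "H / 3" g] by simp
  have R: "2 * (1 / \<sigma> + 3 * L2 / (2 * H)) / \<mu> * sqrt (H / 3) * g powr (3/2)
      = 2 * (1 / \<sigma> + 3 * L2 / (2 * H)) / \<mu> * (s * g)"
    using gp sq by (simp add: ac_simps)
  have rmu: "r * \<mu> \<le> g" using key r s0 by (smt (verit) mult_nonneg_nonneg distrib_left)
  have rs: "r * s \<le> g" using key r mu by (smt (verit) mult_nonneg_nonneg distrib_left)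
  have t1: "A * r \<le> (s * g) / (\<mu> * \<sigma>)"
  proof -
    have "A * r = s * r / \<sigma>" using A by simp
    also have "\<dots> \<le> s * (g / \<mu>) / \<sigma>"
      using rmu mu s0 sg by (intro divide_right_mono mult_left_mono) (auto simp: field_simps)
    finally show ?thesis by (simp add: field_simps)
  qed
  have t2: "L2 * r\<^sup>2 \<le> 3 * L2 * (s * g) / (\<mu> * H)"
  proof (cases "s = 0")
    case True
    then have "g = 0" using ss Hp by simp
    then have "r = 0" using rmu r mu by (smt (verit) mult_pos_pos)
    then show ?thesis using True by simp
  next
    case False
    then have sp: "s > 0" using s0 by simp
    have "r * r * (\<mu> * s) \<le> g * g" using rmu rs r mu s0
      by (smt (verit) mult_mono mult_nonneg_nonneg mult.commute mult.left_commute mult.assoc)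
    also have "g * g = g * (3 * s\<^sup>2 / H)" using ss Hp by (simp add: field_simps)
    finally have "r * r * (\<mu> * s) \<le> g * (3 * s\<^sup>2 / H)" .
    then have "r * r * \<mu> \<le> 3 * g * s / H" using sp Hp
      by (simp add: field_simps power2_eq_square)
    then have "r\<^sup>2 \<le> 3 * g * s / (H * \<mu>)" using mu Hp by (simp add: field_simps power2_eq_square)
    then have "L2 * r\<^sup>2 \<le> L2 * (3 * g * s / (H * \<mu>))" using L by (rule mult_left_mono)
    then show ?thesis by (simp add: field_simps)
  qed
  have t1': "(s * g) / (\<mu> * \<sigma>) \<le> 2 * ((s * g) / (\<mu> * \<sigma>))"
  proof -
    have "0 \<le> (s * g) / (\<mu> * \<sigma>)" using s0 g mu sg by simp
    then show ?thesis by (smt (verit))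
  qed
  have "2 * (1 / \<sigma> + 3 * L2 / (2 * H)) / \<mu> * (s * g) = 2 * ((s * g) / (\<mu> * \<sigma>)) + 3 * L2 * (s * g) / (\<mu> * H)"
    using Hp mu sg by (simp add: field_simps)
  then show ?thesis using R t1 t1' t2 by (smt (verit))
qed

theorem theorem4:
  fixes N :: "'a::euclidean_space \<Rightarrow> real"
    and D :: "'a set" and \<psi> :: "'a \<Rightarrow> real"
    and f :: "'a \<Rightarrow> real" and gf :: "'a \<Rightarrow> 'a" and Hf :: "'a \<Rightarrow> 'a \<Rightarrow> 'a"
    and d :: "'a \<Rightarrow> real" and gd :: "'a \<Rightarrow> 'a"
    and L2 \<sigma> \<mu> H :: real
    and x :: "nat \<Rightarrow> 'a" and F' :: "nat \<Rightarrow> 'a"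
  assumes norm: "is_norm N"
    and psi: "closed_convex_fun D \<psi>"
    and f_grad: "\<And>y. (f has_derivative (\<lambda>h. gf y \<bullet> h)) (at y)"
    and f_hess: "\<And>y. (gf has_derivative Hf y) (at y)"
    and hess_cont: "\<And>h. continuous_on UNIV (\<lambda>y. Hf y h)"
    and f_convex: "convex_on UNIV f"
    and L2_nonneg: "L2 \<ge> 0"
    and hess_lip: "\<And>y z. y \<in> D \<Longrightarrow> z \<in> D \<Longrightarrow> op_norm N (\<lambda>h. Hf y h - Hf z h) \<le> L2 * N (y - z)"
    and d_grad: "\<And>y. (d has_derivative (\<lambda>h. gd y \<bullet> h)) (at y)"
    and sigma: "0 < \<sigma>" "\<sigma> \<le> 1"
    and d_strong: "\<And>y z. y \<in> D \<Longrightarrow> z \<in> D \<Longrightarrow> d z \<ge> d y + gd y \<bullet> (z - y) + \<sigma> / 2 * (N (z - y))\<^sup>2"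
    and d_lip: "\<And>y z. y \<in> D \<Longrightarrow> z \<in> D \<Longrightarrow> dual_norm N (gd y - gd z) \<le> N (y - z)"
    and mu: "\<mu> > 0"
    and f_strong: "\<And>y h. y \<in> D \<Longrightarrow> Hf y h \<bullet> h \<ge> \<mu> * (N h)\<^sup>2"
    and H: "H \<ge> L2"
    and x0: "x 0 \<in> D"
    and F'0: "F' 0 \<in> subdiff D (\<lambda>y. f y + \<psi> y) (x 0)"
    and step: "\<And>k. is_T D f gf Hf d gd \<psi> (1 / \<sigma> * sqrt (H / 3 * dual_norm N (F' k))) (x k) (x (Suc k))"
    and F'_step: "\<And>k. F' (Suc k) = gf (x (Suc k)) - gf (x k) - Hf (x k) (x (Suc k) - x k)
                     - (1 / \<sigma> * sqrt (H / 3 * dual_norm N (F' k))) *\<^sub>R (gd (x (Suc k)) - gd (x k))"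
  shows "dual_norm N (F' (Suc k)) \<le>
           2 * (1 / \<sigma> + 3 * L2 / (2 * H)) / \<mu> * sqrt (H / 3) * dual_norm N (F' k) powr (3/2)"
  proof -
  have Dc: "convex D" and psic: "convex_on D \<psi>" using psi by (auto simp: closed_convex_fun_def)
  have xD: "x j \<in> D" for j
  proof (cases j)
    case 0 then show ?thesis using x0 by simp
  next
    case (Suc i) then show ?thesis using step[of i] by (simp add: is_T_def)
  qed
  have lin: "linear (Hf y)" for y using has_derivative_linear[OF f_hess] .
  have bl: "bounded_linear (Hf y)" for y using has_derivative_bounded_linear[OF f_hess] .
  have sym: "Hf y u \<bullet> v = Hf y v \<bullet> u" for y u v by (rule hess_sym[OF f_grad f_hess hess_cont])
  define AA where "AA j = 1 / \<sigma> * sqrt (H / 3 * dual_norm N (F' j))" for j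
  have P3: "\<psi> y \<ge> \<psi> (x (Suc j)) - (gf (x j) + Hf (x j) (x (Suc j) - x j) + AA j *\<^sub>R (gd (x (Suc j)) - gd (x j))) \<bullet> (y - x (Suc j))"
    if "y \<in> D" for j y
    using model_opt[OF lin sym d_grad Dc psic step[of j] that] by (simp add: AA_def)
  have P2: "\<psi> y \<ge> \<psi> (x k) + (F' k - gf (x k)) \<bullet> (y - x k)" if y: "y \<in> D" for y
  proof (cases k)
    case 0
    have "\<And>z. z \<in> D \<Longrightarrow> f z + \<psi> z \<ge> f (x 0) + \<psi> (x 0) + F' 0 \<bullet> (z - x 0)"
      using F'0 by (auto simp: subdiff_def)
    from subgrad_split[OF f_grad Dc psic x0 this y] show ?thesis using 0 by simp
  next
    case (Suc j)
    have "F' (Suc j) - gf (x (Suc j)) = - (gf (x j) + Hf (x j) (x (Suc j) - x j) + AA j *\<^sub>R (gd (x (Suc j)) - gd (x j)))"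
      using F'_step[of j] by (simp add: AA_def algebra_simps)
    then have "(F' (Suc j) - gf (x (Suc j))) \<bullet> (y - x (Suc j)) = - ((gf (x j) + Hf (x j) (x (Suc j) - x j) + AA j *\<^sub>R (gd (x (Suc j)) - gd (x j))) \<bullet> (y - x (Suc j)))"
      by (simp only: inner_minus_left)
    then show ?thesis using P3[OF y, of j] unfolding Suc by linarith
  qed
  define xb where "xb = x k"
  define xp where "xp = x (Suc k)"
  define h where "h = xp - xb"
  define r where "r = N h"
  define g where "g = dual_norm N (F' k)"
  define A where "A = AA k"
  define s where "s = sqrt (H / 3 * g)"
  have xbD: "xb \<in> D" and xpD: "xp \<in> D" using xD by (auto simp: xb_def xp_def)
  have r0: "r \<ge> 0" using Nge0[OF norm] by (simp add: r_def)
  have g0: "g \<ge> 0" using dn_ge0[OF norm] by (simp add: g_def)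
  have Hnn: "H \<ge> 0" using H L2_nonneg by simp
  have s0: "s \<ge> 0" unfolding s_def using Hnn g0 by simp
  have As: "A * \<sigma> = s" using sigma by (simp add: A_def AA_def s_def g_def)
  have A0: "A \<ge> 0" using s0 sigma by (simp add: A_def AA_def s_def g_def)
  have Q1: "Hf xb h \<bullet> h \<ge> \<mu> * r\<^sup>2" using f_strong[OF xbD] by (simp add: r_def)
  have Q2: "(gd xp - gd xb) \<bullet> h \<ge> \<sigma> * r\<^sup>2"
  proof -
    have a: "d xp \<ge> d xb + gd xb \<bullet> h + \<sigma> / 2 * r\<^sup>2" using d_strong[OF xbD xpD] by (simp add: h_def r_def)
    have "N (xb - xp) = r" using Ncomm[OF norm] by (simp add: r_def h_def)
    then have b: "d xb \<ge> d xp - gd xp \<bullet> h + \<sigma> / 2 * r\<^sup>2" using d_strong[OF xpD xbD]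
      by (simp add: h_def inner_diff_right)
    show ?thesis using a b by (simp add: inner_diff_left)
  qed
  have Q3: "- (F' k \<bullet> h) \<ge> \<mu> * r\<^sup>2 + A * (\<sigma> * r\<^sup>2)"
  proof -
    have a: "\<psi> xp \<ge> \<psi> xb + (F' k - gf xb) \<bullet> h" using P2[OF xpD] by (simp add: xb_def h_def xp_def)
    have b0: "\<psi> xb \<ge> \<psi> xp - (gf xb + Hf xb h + A *\<^sub>R (gd xp - gd xb)) \<bullet> (xb - xp)"
      using P3[OF xbD, of k] by (simp add: xb_def h_def xp_def A_def)
    have "(gf xb + Hf xb h + A *\<^sub>R (gd xp - gd xb)) \<bullet> (xb - xp) = - ((gf xb + Hf xb h + A *\<^sub>R (gd xp - gd xb)) \<bullet> h)"
      unfolding h_def by (metis inner_minus_right minus_diff_eq)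
    then have b: "\<psi> xb \<ge> \<psi> xp + (gf xb + Hf xb h + A *\<^sub>R (gd xp - gd xb)) \<bullet> h"
      using b0 by linarith
    have "0 \<ge> (F' k - gf xb) \<bullet> h + (gf xb + Hf xb h + A *\<^sub>R (gd xp - gd xb)) \<bullet> h" using a b by linarith
    then have "0 \<ge> F' k \<bullet> h + Hf xb h \<bullet> h + A * ((gd xp - gd xb) \<bullet> h)"
      by (simp add: inner_add_left inner_diff_left)
    moreover have "A * ((gd xp - gd xb) \<bullet> h) \<ge> A * (\<sigma> * r\<^sup>2)" using Q2 A0 by (rule mult_left_mono)
    ultimately show ?thesis using Q1 by linarith
  qed
  have Q4: "- (F' k \<bullet> h) \<le> g * r"
    using dn_mul[OF norm, of "F' k" "- h"] Nminus[OF norm, of h] by (simp add: g_def r_def)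
  have key: "r * (\<mu> + s) \<le> g"
  proof (cases "r = 0")
    case True then show ?thesis using g0 by simp
  next
    case False
    then have rp: "r > 0" using r0 by simp
    have e: "A * (\<sigma> * r\<^sup>2) = s * r\<^sup>2" using As by (metis mult.assoc)
    have e2: "r * (r * (\<mu> + s)) = \<mu> * r\<^sup>2 + s * r\<^sup>2" by (simp add: power2_eq_square algebra_simps)
    have "r * (r * (\<mu> + s)) \<le> r * g" unfolding e2 using Q3 Q4 e by (simp add: mult.commute)
    then show ?thesis using rp by simp
  qed
  have Q5: "dual_norm N (F' (Suc k)) \<le> L2 * r\<^sup>2 + A * r"
  proof (rule dn_least[OF _ norm])
    fix u assume u: "N u \<le> 1"
    have Fe: "F' (Suc k) = (gf xp - gf xb - Hf xb h) - A *\<^sub>R (gd xp - gd xb)"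
      using F'_step[of k] by (simp add: xp_def xb_def h_def A_def AA_def)
    have T1: "(gf xp - gf xb - Hf xb h) \<bullet> u \<le> L2 * r\<^sup>2"
    proof -
      let ?\<phi> = "\<lambda>t. gf (xb + t *\<^sub>R h) \<bullet> u"
      let ?\<phi>' = "\<lambda>t. Hf (xb + t *\<^sub>R h) h \<bullet> u"
      have "?\<phi> 1 - ?\<phi> 0 - ?\<phi>' 0 \<le> (2 * L2 * r\<^sup>2) / 2"
      proof (rule taylor1)
        fix t :: real assume t: "0 \<le> t" "t \<le> 1"
        show "(?\<phi> has_real_derivative ?\<phi>' t) (at t)" by (rule ray_gf[OF f_hess])
        let ?B = "\<lambda>k. Hf (xb + t *\<^sub>R h) k - Hf xb k"
        have Bl: "bounded_linear ?B" using bl by (intro bounded_linear_sub)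
        have zD: "xb + t *\<^sub>R h \<in> D" using seg_in[OF Dc xbD xpD t] by (simp add: h_def)
        have M: "op_norm N ?B \<le> L2 * (t * r)"
          using hess_lip[OF zD xbD] Nscale[OF norm, of t h] t by (simp add: r_def)
        have M0: "op_norm N ?B \<ge> 0" by (rule op_ge0[OF norm Bl])
        have "?B h \<bullet> u \<le> 2 * op_norm N ?B * N h * N u"
        proof (rule polar[OF norm bounded_linear.linear[OF Bl]])
          show "?B a \<bullet> b = ?B b \<bullet> a" for a b using sym by (simp add: inner_diff_left)
          show "\<bar>?B y \<bullet> y\<bar> \<le> op_norm N ?B * (N y)\<^sup>2" for y by (rule op_mul[OF norm Bl])
        qed
        also have "\<dots> \<le> 2 * op_norm N ?B * r * 1"
          unfolding r_def[symmetric]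
          using u M0 r0 Nge0[OF norm, of u] by (intro mult_left_mono) auto
        also have "\<dots> \<le> 2 * (L2 * (t * r)) * r"
          using M r0 by (simp add: mult_right_mono)
        finally show "?\<phi>' t - ?\<phi>' 0 \<le> 2 * L2 * r\<^sup>2 * t"
          by (simp add: inner_diff_left power2_eq_square algebra_simps)
      qed
      then show ?thesis by (simp add: h_def inner_diff_left)
    qed
    have T2: "- ((A *\<^sub>R (gd xp - gd xb)) \<bullet> u) \<le> A * r"
    proof -
      have "(gd xb - gd xp) \<bullet> u \<le> dual_norm N (gd xb - gd xp)" by (rule dn_upper[OF norm u])
      also have "\<dots> \<le> N (xb - xp)" by (rule d_lip[OF xbD xpD])
      also have "\<dots> = r" using Ncomm[OF norm] by (simp add: r_def h_def)
      finally have "(gd xb - gd xp) \<bullet> u \<le> r" .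
      then have "A * ((gd xb - gd xp) \<bullet> u) \<le> A * r" using A0 by (rule mult_left_mono)
      then show ?thesis by (simp add: inner_diff_left algebra_simps)
    qed
    show "F' (Suc k) \<bullet> u \<le> L2 * r\<^sup>2 + A * r" unfolding Fe using T1 T2 by (simp add: inner_diff_left)
  qed
  have "L2 * r\<^sup>2 + A * r \<le> 2 * (1 / \<sigma> + 3 * L2 / (2 * H)) / \<mu> * sqrt (H / 3) * g powr (3/2)"
    by (rule arith_final[OF r0 g0 mu sigma(1) L2_nonneg H s_def _ key]) (simp add: A_def AA_def s_def g_def)
  then show ?thesis using Q5 by (simp add: g_def)
qed

end
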